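(* Let $F=(f_1,\dots,f_n)$ be twice-differentiable objective functions $\mathbb{R}^d\to\mathbb{R}$ with $\mu\mathbf{I}\preceq\nabla^2f_i\preceq L\mathbf{I}$ for all $i$ (where $0<\mu\le L$), and let $R:=\mathrm{diam}(\mathrm{Pareto}(F))$. Then the map $x^*:(\Delta^{n-1},\ell_1)\to(\mathbb{R}^d,\ell_2)$, $x^*(\beta)=\operatorname{argmin}_x\sum_i\beta_if_i(x)$, is $LR/\mu$-Lipschitz.
   Context: $\Delta^{n-1}$ is the simplex of convex weights. A point $x$ is Pareto optimal if for all $x'$, $f_i(x')<f_i(x)$ for some $i$ implies $f_j(x')>f_j(x)$ for some $j$; $\mathrm{Pareto}(F)$ is the set of Pareto optimal points, and $\mathrm{diam}$ is taken in $\ell_2$. *)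

theory Defs
  imports "HOL-Analysis.Analysis"
begin

definition pareto_set :: "('i \<Rightarrow> 'a \<Rightarrow> real) \<Rightarrow> 'a set" where
  "pareto_set f = {x. \<forall>x'. (\<exists>i. f i x' < f i x) \<longrightarrow> (\<exists>j. f j x' > f j x)}"

definition simplex_weights :: "('i::finite \<Rightarrow> real) set" where
  "simplex_weights = {\<beta>. (\<forall>i. 0 \<le> \<beta> i) \<and> (\<Sum>i\<in>UNIV. \<beta> i) = 1}"

definition is_weighted_argmin :: "('i::finite \<Rightarrow> 'a \<Rightarrow> real) \<Rightarrow> ('i \<Rightarrow> real) \<Rightarrow> 'a \<Rightarrow> bool" where
  "is_weighted_argmin f \<beta> x \<longleftrightarrow> (\<forall>y. (\<Sum>i\<in>UNIV. \<beta> i * f i x) \<le> (\<Sum>i\<in>UNIV. \<beta> i * f i y))"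

end

theory Submission
  imports Defs
begin

lemma taylor_upper:
  fixes p p' p'' :: "real \<Rightarrow> real"
  assumes d1: "\<And>t. (p has_real_derivative p' t) (at t)"
    and d2: "\<And>t. (p' has_real_derivative p'' t) (at t)"
    and b: "\<And>t. p'' t \<le> c"
  shows "p 1 \<le> p 0 + p' 0 + c/2"
proof -
  have dd: "p' t \<le> p' 0 + c * t" if "0 \<le> t" for t
  proof -
    have "\<exists>y. ((\<lambda>s. p' s - c * s) has_real_derivative y) (at x) \<and> y \<le> 0" for x
      proof (intro exI conjI)
      show "((\<lambda>s. p' s - c * s) has_real_derivative (p'' x - c)) (at x)"
        using DERIV_diff[OF d2[of x] DERIV_cmult[where c=c, OF DERIV_ident]] by simp
      show "p'' x - c \<le> 0" using b[of x] by simp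
    qed
    then have "(\<lambda>s. p' s - c * s) t \<le> (\<lambda>s. p' s - c * s) 0"
      by (rule DERIV_nonpos_imp_nonincreasing[OF that, of "\<lambda>s. p' s - c * s"])
    then show ?thesis by simp
  qed
  have H: "\<exists>y. ((\<lambda>s. p s - p' 0 * s - c/2 * s^2) has_real_derivative y) (at x) \<and> y \<le> 0" if "0 \<le> x" for x
    proof (intro exI conjI)
    show "((\<lambda>s. p s - p' 0 * s - c/2 * s^2) has_real_derivative (p' x - p' 0 - c * x)) (at x)"
      using DERIV_diff[OF DERIV_diff[OF d1[of x] DERIV_cmult[where c="p' 0", OF DERIV_ident]] DERIV_cmult[OF DERIV_pow[of 2 x], where c="c/2"]] by simp
    show "p' x - p' 0 - c * x \<le> 0" using dd[OF that] by simp
  qed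
  have "(\<lambda>s. p s - p' 0 * s - c/2 * s^2) 1 \<le> (\<lambda>s. p s - p' 0 * s - c/2 * s^2) 0"
    by (rule DERIV_nonpos_imp_nonincreasing[of 0 1 "\<lambda>s. p s - p' 0 * s - c/2 * s^2"]) (use H in auto)
  then show ?thesis by simp
qed

lemma taylor_lower:
  fixes p p' p'' :: "real \<Rightarrow> real"
  assumes d1: "\<And>t. (p has_real_derivative p' t) (at t)"
    and d2: "\<And>t. (p' has_real_derivative p'' t) (at t)"
    and b: "\<And>t. c \<le> p'' t"
  shows "p 0 + p' 0 + c/2 \<le> p 1"
proof -
  have "(\<lambda>t. - p t) 1 \<le> (\<lambda>t. - p t) 0 + (\<lambda>t. - p' t) 0 + (-c)/2"
    by (rule taylor_upper[where p''="\<lambda>t. - p'' t"]) (simp_all add: DERIV_minus d1 d2 b)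
  then show ?thesis by simp
qed

lemma line_derivs:
  fixes F :: "'a::euclidean_space \<Rightarrow> real"
  assumes gd: "\<And>x. (F has_derivative (\<lambda>h. G x \<bullet> h)) (at x)"
    and hd: "\<And>x. (G has_derivative H x) (at x)"
  shows "((\<lambda>t. F (x + t *\<^sub>R v)) has_real_derivative (G (x + t *\<^sub>R v) \<bullet> v)) (at t)"
    and "((\<lambda>t. G (x + t *\<^sub>R v) \<bullet> v) has_real_derivative (v \<bullet> H (x + t *\<^sub>R v) v)) (at t)"
proof -
  have l: "((\<lambda>t. x + t *\<^sub>R v) has_derivative (\<lambda>t. t *\<^sub>R v)) (at t)"
    using has_derivative_add[OF has_derivative_const[of x] has_derivative_scaleR_left[OF has_derivative_ident, of v]] by simp
  have "((\<lambda>t. F (x + t *\<^sub>R v)) has_derivative (\<lambda>s. G (x + t *\<^sub>R v) \<bullet> (s *\<^sub>R v))) (at t)"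
    using has_derivative_compose[OF l gd] by simp
  then show "((\<lambda>t. F (x + t *\<^sub>R v)) has_real_derivative (G (x + t *\<^sub>R v) \<bullet> v)) (at t)"
    unfolding has_field_derivative_def
    by (rule has_derivative_eq_rhs) (auto simp: fun_eq_iff)
  have lin: "linear (H (x + t *\<^sub>R v))" using hd has_derivative_linear by blast
  have "((\<lambda>t. G (x + t *\<^sub>R v) \<bullet> v) has_derivative (\<lambda>s. H (x + t *\<^sub>R v) (s *\<^sub>R v) \<bullet> v)) (at t)"
    using has_derivative_inner_left[OF has_derivative_compose[OF l hd]] by simp
  then show "((\<lambda>t. G (x + t *\<^sub>R v) \<bullet> v) has_real_derivative (v \<bullet> H (x + t *\<^sub>R v) v)) (at t)"
    unfolding has_field_derivative_def
    by (rule has_derivative_eq_rhs) (auto simp: fun_eq_iff linear_scale[OF lin] inner_commute)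
qed


lemma quad_bounds:
  fixes F :: "'a::euclidean_space \<Rightarrow> real"
  assumes gd: "\<And>x. (F has_derivative (\<lambda>h. G x \<bullet> h)) (at x)"
    and hd: "\<And>x. (G has_derivative H x) (at x)"
    and hl: "\<And>x v. m * (norm v)\<^sup>2 \<le> v \<bullet> H x v"
    and hu: "\<And>x v. v \<bullet> H x v \<le> M * (norm v)\<^sup>2"
  shows "F y \<le> F x + G x \<bullet> (y - x) + M * (norm (y - x))\<^sup>2 / 2"
    and "F x + G x \<bullet> (y - x) + m * (norm (y - x))\<^sup>2 / 2 \<le> F y"
proof -
  let ?v = "y - x"
  have e0: "x + 0 *\<^sub>R ?v = x" by (simp only: scaleR_zero_left add_0_right)
  have e1: "x + 1 *\<^sub>R ?v = y" by (simp only: scaleR_one add_diff_cancel_left'[symmetric] diff_add_cancel add.commute[of x])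
  have "F (x + 1 *\<^sub>R ?v) \<le> F (x + 0 *\<^sub>R ?v) + G (x + 0 *\<^sub>R ?v) \<bullet> ?v + M * (norm ?v)\<^sup>2 / 2"
    by (rule taylor_upper[of "\<lambda>t. F (x + t *\<^sub>R ?v)" "\<lambda>t. G (x + t *\<^sub>R ?v) \<bullet> ?v"
          "\<lambda>t. ?v \<bullet> H (x + t *\<^sub>R ?v) ?v", OF line_derivs(1)[OF gd hd] line_derivs(2)[OF gd hd] hu])
  then show "F y \<le> F x + G x \<bullet> (y - x) + M * (norm (y - x))\<^sup>2 / 2" by (simp only: e0 e1)
  have "F (x + 0 *\<^sub>R ?v) + G (x + 0 *\<^sub>R ?v) \<bullet> ?v + m * (norm ?v)\<^sup>2 / 2 \<le> F (x + 1 *\<^sub>R ?v)"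
    by (rule taylor_lower[of "\<lambda>t. F (x + t *\<^sub>R ?v)" "\<lambda>t. G (x + t *\<^sub>R ?v) \<bullet> ?v"
          "\<lambda>t. ?v \<bullet> H (x + t *\<^sub>R ?v) ?v", OF line_derivs(1)[OF gd hd] line_derivs(2)[OF gd hd] hl])
  then show "F x + G x \<bullet> (y - x) + m * (norm (y - x))\<^sup>2 / 2 \<le> F y" by (simp only: e0 e1)
qed


theorem lemma8:
  fixes f :: "'i::finite \<Rightarrow> 'a::euclidean_space \<Rightarrow> real"
    and grad :: "'i \<Rightarrow> 'a \<Rightarrow> 'a"
    and hess :: "'i \<Rightarrow> 'a \<Rightarrow> 'a \<Rightarrow> 'a"
    and \<mu> L :: real
  assumes mu_pos: "0 < \<mu>" and mu_le_L: "\<mu> \<le> L"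
    and grad_deriv: "\<And>i x. (f i has_derivative (\<lambda>h. grad i x \<bullet> h)) (at x)"
    and hess_deriv: "\<And>i x. (grad i has_derivative hess i x) (at x)"
    and hess_lower: "\<And>i x v. \<mu> * (norm v)\<^sup>2 \<le> v \<bullet> hess i x v"
    and hess_upper: "\<And>i x v. v \<bullet> hess i x v \<le> L * (norm v)\<^sup>2"
    and beta: "\<beta> \<in> simplex_weights" and beta': "\<beta>' \<in> simplex_weights"
    and xmin: "is_weighted_argmin f \<beta> x" and xmin': "is_weighted_argmin f \<beta>' x'"
  shows "norm (x - x') \<le> L * diameter (pareto_set f) / \<mu> * (\<Sum>i\<in>UNIV. \<bar>\<beta> i - \<beta>' i\<bar>)"
proof -
  have Lpos: "0 < L" using mu_pos mu_le_L by linarith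
  have QU: "\<And>i x y. f i y \<le> f i x + grad i x \<bullet> (y - x) + L * (norm (y - x))\<^sup>2 / 2"
    by (rule quad_bounds(1)[OF grad_deriv hess_deriv hess_lower hess_upper])
  have QL: "\<And>i x y. f i x + grad i x \<bullet> (y - x) + \<mu> * (norm (y - x))\<^sup>2 / 2 \<le> f i y"
    by (rule quad_bounds(2)[OF grad_deriv hess_deriv hess_lower hess_upper])
  have crit: "grad i z = 0" if zm: "\<And>y. f i z \<le> f i y" for i z
  proof -
    have "(\<lambda>h. grad i z \<bullet> h) = (\<lambda>v. 0)"
      by (rule differential_zero_maxmin[of z UNIV "f i"]) (use zm grad_deriv in auto)
    then have "grad i z \<bullet> grad i z = 0" by metis
    then show "grad i z = 0" by simp
  qed
  have sw: "(\<Sum>i\<in>UNIV. b i) = 1" "\<And>i. 0 \<le> b i" if "b \<in> simplex_weights" for b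
    using that by (auto simp: simplex_weights_def)
  have crit_w: "(\<Sum>i\<in>UNIV. b i *\<^sub>R grad i z) = 0"
    if b: "b \<in> simplex_weights" and zm: "is_weighted_argmin f b z" for b z
  proof -
    have d: "((\<lambda>y. \<Sum>i\<in>UNIV. b i * f i y) has_derivative (\<lambda>h. \<Sum>i\<in>UNIV. b i * (grad i z \<bullet> h))) (at z)"
      by (intro has_derivative_sum has_derivative_mult_right grad_deriv)
    have "(\<lambda>h. \<Sum>i\<in>UNIV. b i * (grad i z \<bullet> h)) = (\<lambda>v. 0)"
      by (rule differential_zero_maxmin[OF _ _ d, of UNIV]) (use zm in \<open>auto simp: is_weighted_argmin_def\<close>)
    then have "(\<Sum>i\<in>UNIV. b i * (grad i z \<bullet> s)) = 0" for s by metis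
    then have "(\<Sum>i\<in>UNIV. b i *\<^sub>R grad i z) \<bullet> (\<Sum>i\<in>UNIV. b i *\<^sub>R grad i z) = 0"
      by (simp add: inner_sum_left)
    then show ?thesis by simp
  qed
  have wlower: "(\<Sum>i\<in>UNIV. b i * f i z) + \<mu> * (norm (y - z))\<^sup>2 / 2 \<le> (\<Sum>i\<in>UNIV. b i * f i y)"
    if b: "b \<in> simplex_weights" and zm: "is_weighted_argmin f b z" for b z y
  proof -
    have "(\<Sum>i\<in>UNIV. b i * f i z) + \<mu> * (norm (y - z))\<^sup>2 / 2
        = (\<Sum>i\<in>UNIV. b i * f i z) + (\<Sum>i\<in>UNIV. b i *\<^sub>R grad i z) \<bullet> (y - z) + (\<Sum>i\<in>UNIV. b i) * (\<mu> * (norm (y - z))\<^sup>2 / 2)"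
      using crit_w[OF b zm] sw(1)[OF b] by simp
    also have "\<dots> = (\<Sum>i\<in>UNIV. b i * (f i z + grad i z \<bullet> (y - z) + \<mu> * (norm (y - z))\<^sup>2 / 2))"
      by (simp add: distrib_left sum.distrib inner_sum_left sum_distrib_right)
    also have "\<dots> \<le> (\<Sum>i\<in>UNIV. b i * f i y)"
      by (rule sum_mono, rule mult_left_mono[OF QL]) (use sw(2)[OF b] in auto)
    finally show ?thesis .
  qed
  have pareto_w: "z \<in> pareto_set f"
    if b: "b \<in> simplex_weights" and zm: "is_weighted_argmin f b z" for b z
    unfolding pareto_set_def
  proof (intro CollectI allI impI, rule ccontr)
    fix w assume ex: "\<exists>i. f i w < f i z" and nj: "\<not> (\<exists>j. f j z < f j w)"
    then have le: "\<And>j. f j w \<le> f j z" by (meson not_le)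
    have "(\<Sum>i\<in>UNIV. b i * f i w) \<le> (\<Sum>i\<in>UNIV. b i * f i z)"
      by (rule sum_mono, rule mult_left_mono[OF le]) (use sw(2)[OF b] in auto)
    with wlower[OF b zm, of w] have "\<mu> * (norm (w - z))\<^sup>2 \<le> 0" by linarith
    with mu_pos have "(norm (w - z))\<^sup>2 \<le> 0" by (simp add: mult_le_0_iff)
    then have "w = z" by simp
    with ex show False by simp
  qed
  have exmin: "\<exists>m. \<forall>y. f i m \<le> f i y" for i
  proof -
    define r where "r = 2 * norm (grad i 0) / \<mu>"
    have r0: "0 \<le> r" unfolding r_def using mu_pos by simp
    have cont: "continuous_on (cball 0 r) (f i)"
      by (rule has_derivative_continuous_on[OF has_derivative_at_withinI[OF grad_deriv]])
    obtain m where m: "m \<in> cball 0 r" "\<forall>y\<in>cball 0 r. f i m \<le> f i y"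
      using continuous_attains_inf[OF compact_cball _ cont] r0 by auto
    have "f i m \<le> f i y" for y
    proof (cases "y \<in> cball 0 r")
      case True then show ?thesis using m by auto
    next
      case False
      then have ny: "r < norm y" by simp
      have q: "f i 0 + grad i 0 \<bullet> y + \<mu> * (norm y)\<^sup>2 / 2 \<le> f i y" using QL[of i 0 y] by simp
      have cs: "- (norm (grad i 0) * norm y) \<le> grad i 0 \<bullet> y"
        using Cauchy_Schwarz_ineq2[of "grad i 0" y] by linarith
      have "2 * norm (grad i 0) < \<mu> * norm y" using ny mu_pos unfolding r_def by (simp add: field_simps)
      then have "2 * norm (grad i 0) * norm y \<le> \<mu> * norm y * norm y"
        by (intro mult_right_mono) auto
      then have "norm (grad i 0) * norm y \<le> \<mu> * (norm y)\<^sup>2 / 2" by (simp add: power2_eq_square)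
      with q cs have "f i 0 \<le> f i y" by linarith
      moreover have "f i m \<le> f i 0" using m r0 by auto
      ultimately show ?thesis by linarith
    qed
    then show ?thesis by blast
  qed
  then obtain m where mmin: "\<And>i y. f i (m i) \<le> f i y" by metis
  have gm: "grad i (m i) = 0" for i using crit mmin by blast
  have m_par: "m i \<in> pareto_set f" for i
  proof (rule pareto_w)
    show "(\<lambda>j. if j = i then 1 else 0) \<in> simplex_weights" by (simp add: simplex_weights_def)
    have e: "(\<Sum>j\<in>UNIV. (if j = i then 1 else 0) * f j y) = f i y" for y
      by (subst sum.cong[OF refl, of _ _ "\<lambda>j. if j = i then f j y else 0"]) auto
    show "is_weighted_argmin f (\<lambda>j. if j = i then 1 else 0) (m i)"
      unfolding is_weighted_argmin_def e by (simp add: mmin)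
  qed
  have x_par: "x \<in> pareto_set f" by (rule pareto_w[OF beta xmin])
  have x'_par: "x' \<in> pareto_set f" by (rule pareto_w[OF beta' xmin'])
  define y0 where "y0 = m undefined"
  have sub: "pareto_set f \<subseteq> (\<Union>i. cball (m i) (1 + 2 * (f i y0 - f i (m i)) / \<mu>))"
  proof
    fix p assume p: "p \<in> pareto_set f"
    have "\<exists>i. f i p \<le> f i y0"
    proof (rule ccontr)
      assume "\<not> (\<exists>i. f i p \<le> f i y0)"
      then have lt: "\<And>i. f i y0 < f i p" by (meson not_le)
      from p have "(\<exists>i. f i y0 < f i p) \<longrightarrow> (\<exists>j. f j y0 > f j p)" unfolding pareto_set_def by blast
      then obtain j where "f j y0 > f j p" using lt by blast
      with lt[of j] show False by simp
    qed
    then obtain i where i: "f i p \<le> f i y0" by blast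
    have "f i (m i) + \<mu> * (norm (p - m i))\<^sup>2 / 2 \<le> f i p" using QL[of i "m i" p] gm by simp
    then have "\<mu> * (norm (p - m i))\<^sup>2 \<le> 2 * f i y0 - 2 * f i (m i)" using i by linarith
    then have nn: "(norm (p - m i))\<^sup>2 \<le> 2 * (f i y0 - f i (m i)) / \<mu>" using mu_pos by (simp add: field_simps)
    have "0 \<le> (norm (p - m i) - 1)\<^sup>2" by simp
    then have "2 * norm (p - m i) \<le> 1 + (norm (p - m i))\<^sup>2" by (simp add: power2_eq_square algebra_simps)
    then have "norm (p - m i) \<le> 1 + (norm (p - m i))\<^sup>2" using norm_ge_zero[of "p - m i"] by linarith
    with nn have "dist (m i) p \<le> 1 + 2 * (f i y0 - f i (m i)) / \<mu>"
      by (simp add: dist_norm norm_minus_commute)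
    then show "p \<in> (\<Union>i. cball (m i) (1 + 2 * (f i y0 - f i (m i)) / \<mu>))" by auto
  qed
  have bdd: "bounded (pareto_set f)"
    by (rule bounded_subset[OF bounded_UN[OF finite] sub]) auto
  define R where "R = diameter (pareto_set f)"
  have R0: "0 \<le> R" unfolding R_def by (rule diameter_ge_0[OF bdd])
  have dR: "norm (x' - m i) \<le> R" for i
    using diameter_bounded_bound[OF bdd x'_par m_par[of i]] by (simp add: R_def dist_norm)
  have gradbound: "norm (grad i p) \<le> L * norm (p - m i)" for i p
  proof -
    let ?g = "grad i p"
    have "f i (m i) \<le> f i (p - (1/L) *\<^sub>R ?g)" by (rule mmin)
    also have "\<dots> \<le> f i p + ?g \<bullet> ((p - (1/L) *\<^sub>R ?g) - p) + L * (norm ((p - (1/L) *\<^sub>R ?g) - p))\<^sup>2 / 2"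
      by (rule QU)
    also have "\<dots> = f i p - (norm ?g)\<^sup>2 / (2 * L)"
      using Lpos by (simp add: power_mult_distrib dot_square_norm power2_eq_square field_simps)
    finally have A: "f i (m i) \<le> f i p - (norm ?g)\<^sup>2 / (2 * L)" .
    have B: "f i p \<le> f i (m i) + L * (norm (p - m i))\<^sup>2 / 2" using QU[of i p "m i"] gm by simp
    from A B have "(norm ?g)\<^sup>2 / (2 * L) \<le> L * (norm (p - m i))\<^sup>2 / 2" by linarith
    then have "(norm ?g)\<^sup>2 \<le> (L * norm (p - m i))\<^sup>2"
      using Lpos by (simp add: field_simps power_mult_distrib power2_eq_square)
    then show ?thesis by (rule power2_le_imp_le) (use Lpos in simp)
  qed
  define d where "d = x' - x"
  have mono: "\<mu> * (norm d)\<^sup>2 \<le> (grad i x' - grad i x) \<bullet> d" for i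
  proof -
    have 1: "f i x + grad i x \<bullet> d + \<mu> * (norm d)\<^sup>2 / 2 \<le> f i x'" using QL[of i x x'] by (simp add: d_def)
    have 2: "f i x' - grad i x' \<bullet> d + \<mu> * (norm d)\<^sup>2 / 2 \<le> f i x" using QL[of i x' x]
      by (simp add: d_def norm_minus_commute inner_diff_right)
    show ?thesis using 1 2 by (simp add: inner_diff_left)
  qed
  have cx: "(\<Sum>i\<in>UNIV. \<beta> i *\<^sub>R grad i x) = 0" by (rule crit_w[OF beta xmin])
  have cx': "(\<Sum>i\<in>UNIV. \<beta>' i *\<^sub>R grad i x') = 0" by (rule crit_w[OF beta' xmin'])
  define S where "S = (\<Sum>i\<in>UNIV. \<bar>\<beta> i - \<beta>' i\<bar>)"
  have S0: "0 \<le> S" unfolding S_def by (rule sum_nonneg) simp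
  have "\<mu> * (norm d)\<^sup>2 = (\<Sum>i\<in>UNIV. \<beta> i * (\<mu> * (norm d)\<^sup>2))"
    by (simp add: sum_distrib_right[symmetric] sw(1)[OF beta])
  also have "\<dots> \<le> (\<Sum>i\<in>UNIV. \<beta> i * ((grad i x' - grad i x) \<bullet> d))"
    by (rule sum_mono, rule mult_left_mono[OF mono]) (use sw(2)[OF beta] in auto)
  also have "\<dots> = (\<Sum>i\<in>UNIV. (\<beta> i - \<beta>' i) * (grad i x' \<bullet> d))"
  proof -
    have e1: "(\<Sum>i\<in>UNIV. \<beta> i * ((grad i x' - grad i x) \<bullet> d)) = (\<Sum>i\<in>UNIV. \<beta> i * (grad i x' \<bullet> d)) - (\<Sum>i\<in>UNIV. \<beta> i *\<^sub>R grad i x) \<bullet> d"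
      by (simp add: inner_diff_left right_diff_distrib sum_subtractf inner_sum_left)
    have e2: "(\<Sum>i\<in>UNIV. \<beta>' i *\<^sub>R grad i x') \<bullet> d = (\<Sum>i\<in>UNIV. \<beta>' i * (grad i x' \<bullet> d))"
      by (simp add: inner_sum_left)
    have e3: "(\<Sum>i\<in>UNIV. (\<beta> i - \<beta>' i) * (grad i x' \<bullet> d)) = (\<Sum>i\<in>UNIV. \<beta> i * (grad i x' \<bullet> d)) - (\<Sum>i\<in>UNIV. \<beta>' i * (grad i x' \<bullet> d))"
      by (simp add: left_diff_distrib sum_subtractf)
    show ?thesis using e1 e2 e3 cx cx' by simp
  qed
  also have "\<dots> \<le> (\<Sum>i\<in>UNIV. \<bar>\<beta> i - \<beta>' i\<bar> * (L * R * norm d))"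
  proof (rule sum_mono)
    fix i :: 'i
    have "norm (grad i x') \<le> L * R"
      using gradbound[of i x'] mult_left_mono[OF dR[of i], of L] Lpos by linarith
    then have "\<bar>grad i x' \<bullet> d\<bar> \<le> L * R * norm d"
      using Cauchy_Schwarz_ineq2[of "grad i x'" d] mult_right_mono[of "norm (grad i x')" "L * R" "norm d"]
      by simp
    then have "\<bar>\<beta> i - \<beta>' i\<bar> * \<bar>grad i x' \<bullet> d\<bar> \<le> \<bar>\<beta> i - \<beta>' i\<bar> * (L * R * norm d)"
      by (rule mult_left_mono) simp
    moreover have "(\<beta> i - \<beta>' i) * (grad i x' \<bullet> d) \<le> \<bar>\<beta> i - \<beta>' i\<bar> * \<bar>grad i x' \<bullet> d\<bar>"
      by (metis abs_ge_self abs_mult)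
    ultimately show "(\<beta> i - \<beta>' i) * (grad i x' \<bullet> d) \<le> \<bar>\<beta> i - \<beta>' i\<bar> * (L * R * norm d)" by linarith
  qed
  also have "\<dots> = S * (L * R * norm d)" by (simp add: S_def sum_distrib_right)
  finally have key: "\<mu> * (norm d)\<^sup>2 \<le> S * (L * R * norm d)" .
  have "norm d \<le> L * R / \<mu> * S"
  proof (cases "norm d = 0")
    case True then show ?thesis using Lpos mu_pos R0 S0 by simp
  next
    case False
    then have np: "0 < norm d" by simp
    have "(\<mu> * norm d) * norm d \<le> (S * L * R) * norm d" using key by (simp add: power2_eq_square mult_ac)
    then have "\<mu> * norm d \<le> S * L * R" using np by (rule mult_right_le_imp_le)
    then show ?thesis using mu_pos by (simp add: field_simps)
  qed
  then show ?thesis by (simp add: R_def S_def d_def norm_minus_commute)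
qed

end
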